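(* Let $X,Y$ be compact metric spaces, $d$ the metric on $X$, and let $\phi:\mathrm{M}_m(\mathrm{C}(X))\to\mathrm{M}_{nm}(\mathrm{C}(Y))$ be a diagonal $*$-homomorphism with eigenvalue maps $\lambda_1,\dots,\lambda_n:Y\to X$, i.e. $\phi(f)=\mathrm{diag}(f\circ\lambda_1,\dots,f\circ\lambda_n)$ with each $f\circ\lambda_s$ an $m\times m$ block. Let $\epsilon>0$, $f\in\mathrm{M}_m(\mathrm{C}(X))$, and choose $\eta>0$ such that $\|f(x)-f(y)\|<\epsilon$ whenever $d(x,y)<2\eta$. Let $U$ be the open ball of radius $\eta$ centred at $x_0\in X$ and suppose that $Y=\lambda_1^{-1}(U)\cup\cdots\cup\lambda_n^{-1}(U)$. Then there exist a unitary $u\in\mathrm{M}_{nm}(\mathrm{C}(Y))$ and an element $b\in\mathrm{M}_{nm-m}(\mathrm{C}(Y))$ such that \[ \Big\|u\,\phi(f)\,u^*-\begin{pmatrix} f(x_0)&0\\0&b\end{pmatrix}\Big\|<\epsilon, \] where $f(x_0)\in\mathrm{M}_m$ is regarded as a constant function. *)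

theory Defs
  imports "HOL-Analysis.Analysis" "Jordan_Normal_Form.Matrix"
begin

definition cvec_norm :: "complex vec \<Rightarrow> real" where
  "cvec_norm v = sqrt (\<Sum>i<dim_vec v. (cmod (vec_index v i))\<^sup>2)"

definition op_norm :: "complex mat \<Rightarrow> real" where
  "op_norm A = Sup {cvec_norm (Matrix.mult_mat_vec A v) | v. v \<in> carrier_vec (dim_col A) \<and> cvec_norm v \<le> 1}"

definition cadjoint :: "complex mat \<Rightarrow> complex mat" where
  "cadjoint A = mat (dim_col A) (dim_row A) (\<lambda>(i,j). cnj (A $$ (j,i)))"

definition unitary_mat :: "complex mat \<Rightarrow> bool" where
  "unitary_mat U \<longleftrightarrow> (\<exists>k. U \<in> carrier_mat k k \<and>
      U * cadjoint U = 1\<^sub>m k \<and> cadjoint U * U = 1\<^sub>m k)"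

text \<open>Elements of M_k(C(X)): functions X -> k x k complex matrices with continuous entries.\<close>
definition mat_cont :: "nat \<Rightarrow> ('a::topological_space \<Rightarrow> complex mat) \<Rightarrow> bool" where
  "mat_cont k f \<longleftrightarrow> (\<forall>x. f x \<in> carrier_mat k k) \<and>
      (\<forall>i<k. \<forall>j<k. continuous_on UNIV (\<lambda>x. f x $$ (i,j)))"

definition sup_norm :: "('a \<Rightarrow> complex mat) \<Rightarrow> real" where
  "sup_norm g = (SUP y. op_norm (g y))"

text \<open>The diagonal *-homomorphism phi(f) = diag(f o lambda_1, ..., f o lambda_n),
  blocks of size m; block s (0-based, s < n) is f o lam s.\<close>
definition diag_hom :: "nat \<Rightarrow> nat \<Rightarrow> (nat \<Rightarrow> 'b \<Rightarrow> 'a) \<Rightarrow> ('a \<Rightarrow> complex mat) \<Rightarrow> 'b \<Rightarrow> complex mat" where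
  "diag_hom m n lam f y = mat (n*m) (n*m) (\<lambda>(i,j).
      if i div m = j div m then f (lam (i div m) y) $$ (i mod m, j mod m) else 0)"

end

theory Submission
  imports Defs "Jordan_Normal_Form.Determinant"
begin


lemma sum_blocks: fixes n m :: nat shows "(\<Sum>i<n*m. g i::'a::comm_monoid_add) = (\<Sum>s<n. \<Sum>a<m. g (s*m+a))"
proof -
  have "(\<Sum>i<n*m. g i) = (\<Sum>s<n. sum g {s*m..<s*m+m})" by (rule sum.nat_group[symmetric])
  also have "\<dots> = (\<Sum>s<n. \<Sum>a<m. g (s*m+a))"
  proof (rule sum.cong[OF refl])
    fix s
    have "sum g {0+s*m..<m+s*m} = (\<Sum>a=0..<m. g (a+s*m))" by (rule sum.shift_bounds_nat_ivl)
    then show "sum g {s*m..<s*m+m} = (\<Sum>a<m. g (s*m+a))"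
      by (simp add: add.commute atLeast0LessThan)
  qed
  finally show ?thesis .
qed

lemma sum_blocks0: fixes n m :: nat shows "(\<Sum>i\<in>{0..<n*m}. g i::'a::comm_monoid_add) = (\<Sum>s<n. \<Sum>a<m. g (s*m+a))"
  using sum_blocks by (simp add: atLeast0LessThan)

lemma blk_idx: fixes i n m :: nat assumes "i < n*m" shows "i div m < n" "i mod m < m" "(i div m)*m + i mod m = i"
proof -
  have m: "m > 0" using assms by (cases m) auto
  show "i div m < n" using assms by (simp add: less_mult_imp_div_less)
  show "i mod m < m" using m by simp
  show "(i div m)*m + i mod m = i" by simp
qed

lemma blk_idx2: fixes s a n m :: nat assumes "s < n" "a < m"
  shows "(s*m+a) div m = s" "(s*m+a) mod m = a" "s*m+a < n*m"
proof -
  show "(s*m+a) div m = s" using assms by simp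
  show "(s*m+a) mod m = a" using assms by simp
  have "s*m+a < s*m+m" using assms by simp
  also have "\<dots> = Suc s * m" by simp
  also have "\<dots> \<le> n*m" using assms by (intro mult_le_mono1) simp
  finally show "s*m+a < n*m" .
qed

definition ku :: "nat \<Rightarrow> nat \<Rightarrow> (nat \<Rightarrow> nat \<Rightarrow> real) \<Rightarrow> complex mat" where
 "ku m n Q = mat (n*m) (n*m) (\<lambda>(i,j). if i mod m = j mod m then complex_of_real (Q (j div m) (i div m)) else 0)"

definition bd :: "nat \<Rightarrow> nat \<Rightarrow> (nat \<Rightarrow> nat \<Rightarrow> nat \<Rightarrow> complex) \<Rightarrow> complex mat" where
 "bd m n G = mat (n*m) (n*m) (\<lambda>(i,j). if i div m = j div m then G (i div m) (i mod m) (j mod m) else 0)"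

lemma ku_carrier[simp]: "ku m n Q \<in> carrier_mat (n*m) (n*m)" by (simp add: ku_def)
lemma bd_carrier[simp]: "bd m n G \<in> carrier_mat (n*m) (n*m)" by (simp add: bd_def)
lemma dims[simp]: "dim_row (ku m n Q) = n*m" "dim_col (ku m n Q) = n*m"
  "dim_row (bd m n G) = n*m" "dim_col (bd m n G) = n*m"
  by (simp_all add: ku_def bd_def)

lemma ku_adj: "cadjoint (ku m n Q) = mat (n*m) (n*m) (\<lambda>(i,j). if i mod m = j mod m then complex_of_real (Q (i div m) (j div m)) else 0)"
  unfolding cadjoint_def by (rule eq_matI) (auto simp: ku_def)

lemma adj_carrier[simp]: "cadjoint (ku m n Q) \<in> carrier_mat (n*m) (n*m)" by (simp add: ku_adj)

lemma mult_ku_bd: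
  assumes i: "i < n*m" and k: "k < n*m"
  shows "(ku m n Q * bd m n G) $$ (i,k) = complex_of_real (Q (k div m) (i div m)) * G (k div m) (i mod m) (k mod m)"
proof -
  note bi = blk_idx[OF i] and bk = blk_idx[OF k]
  have "(ku m n Q * bd m n G) $$ (i,k) = (\<Sum>l\<in>{0..<n*m}. ku m n Q $$ (i,l) * bd m n G $$ (l,k))"
    using i k by (simp add: scalar_prod_def)
  also have "\<dots> = (\<Sum>t<n. \<Sum>a<m. ku m n Q $$ (i,t*m+a) * bd m n G $$ (t*m+a,k))"
    by (rule sum_blocks0)
  also have "\<dots> = (\<Sum>t<n. \<Sum>a<m. if t = k div m then (if a = i mod m then
      complex_of_real (Q (k div m) (i div m)) * G (k div m) (i mod m) (k mod m) else 0) else 0)"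
  proof (intro sum.cong refl)
    fix t a assume t: "t \<in> {..<n}" and a: "a \<in> {..<m}"
    have l: "t*m+a < n*m" using t a blk_idx2 by auto
    show "ku m n Q $$ (i,t*m+a) * bd m n G $$ (t*m+a,k) = (if t = k div m then (if a = i mod m then
      complex_of_real (Q (k div m) (i div m)) * G (k div m) (i mod m) (k mod m) else 0) else 0)"
      using t a i k l by (auto simp: ku_def bd_def blk_idx2)
  qed
  also have "\<dots> = (\<Sum>t<n. if t = k div m then (\<Sum>a<m. if a = i mod m then
      complex_of_real (Q (k div m) (i div m)) * G (k div m) (i mod m) (k mod m) else 0) else 0)"
    by (intro sum.cong refl) auto
  also have "\<dots> = complex_of_real (Q (k div m) (i div m)) * G (k div m) (i mod m) (k mod m)"
    using bi bk by simp
  finally show ?thesis .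
qed

lemma conj_entry:
  assumes i: "i < n*m" and j: "j < n*m"
  shows "(ku m n Q * bd m n G * cadjoint (ku m n Q)) $$ (i,j) =
     (\<Sum>t<n. complex_of_real (Q t (i div m) * Q t (j div m)) * G t (i mod m) (j mod m))"
proof -
  note bi = blk_idx[OF i] and bj = blk_idx[OF j]
  have "(ku m n Q * bd m n G * cadjoint (ku m n Q)) $$ (i,j) =
     (\<Sum>l\<in>{0..<n*m}. (ku m n Q * bd m n G) $$ (i,l) * cadjoint (ku m n Q) $$ (l,j))"
    using i j by (simp add: scalar_prod_def ku_adj)
  also have "\<dots> = (\<Sum>t<n. \<Sum>a<m. (ku m n Q * bd m n G) $$ (i,t*m+a) * cadjoint (ku m n Q) $$ (t*m+a,j))"
    by (rule sum_blocks0)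
  also have "\<dots> = (\<Sum>t<n. \<Sum>a<m. if a = j mod m then
      complex_of_real (Q t (i div m) * Q t (j div m)) * G t (i mod m) (j mod m) else 0)"
  proof (intro sum.cong refl)
    fix t a assume t: "t \<in> {..<n}" and a: "a \<in> {..<m}"
    have l: "t*m+a < n*m" using t a blk_idx2 by auto
    show "(ku m n Q * bd m n G) $$ (i,t*m+a) * cadjoint (ku m n Q) $$ (t*m+a,j) = (if a = j mod m then
      complex_of_real (Q t (i div m) * Q t (j div m)) * G t (i mod m) (j mod m) else 0)"
      unfolding mult_ku_bd[OF i l] using t a j l by (auto simp: ku_adj blk_idx2)
  qed
  also have "\<dots> = (\<Sum>t<n. complex_of_real (Q t (i div m) * Q t (j div m)) * G t (i mod m) (j mod m))"
    using bj by simp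
  finally show ?thesis .
qed



definition colorth :: "nat \<Rightarrow> (nat \<Rightarrow> nat \<Rightarrow> real) \<Rightarrow> bool" where
  "colorth n Q \<longleftrightarrow> (\<forall>I<n. \<forall>J<n. (\<Sum>t<n. Q t I * Q t J) = (if I = J then 1 else 0))"
definition roworth :: "nat \<Rightarrow> (nat \<Rightarrow> nat \<Rightarrow> real) \<Rightarrow> bool" where
  "roworth n Q \<longleftrightarrow> (\<forall>s<n. \<forall>t<n. (\<Sum>I<n. Q s I * Q t I) = (if s = t then 1 else 0))"

lemma ku_adj_ku: "cadjoint (ku m n Q) = ku m n (\<lambda>s t. Q t s)"
  unfolding ku_adj by (rule eq_matI) (auto simp: ku_def)

lemma bd_one: "bd m n (\<lambda>t a b. if a = b then 1 else 0) = 1\<^sub>m (n*m)"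
proof (rule eq_matI)
  fix i j assume "i < dim_row (1\<^sub>m (n * m))" "j < dim_col (1\<^sub>m (n * m))"
  then have i: "i < n*m" and j: "j < n*m" by auto
  have "(i div m = j div m \<and> i mod m = j mod m) = (i = j)"
    by (metis mod_div_mult_eq)
  then show "bd m n (\<lambda>t a b. if a = b then 1 else 0) $$ (i, j) = 1\<^sub>m (n * m) $$ (i, j)"
    using i j unfolding bd_def by auto
qed auto

lemma ku_unitary1:
  assumes "colorth n Q"
  shows "ku m n Q * cadjoint (ku m n Q) = 1\<^sub>m (n*m)"
proof -
  have "ku m n Q * cadjoint (ku m n Q) = ku m n Q * bd m n (\<lambda>t a b. if a = b then 1 else 0) * cadjoint (ku m n Q)"
    by (simp add: bd_one)
  also have "\<dots> = 1\<^sub>m (n*m)"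
  proof (rule eq_matI)
    fix i j assume "i < dim_row (1\<^sub>m (n * m))" "j < dim_col (1\<^sub>m (n * m))"
    then have i: "i < n*m" and j: "j < n*m" by auto
    note bi = blk_idx[OF i] and bj = blk_idx[OF j]
    have e: "(i div m = j div m \<and> i mod m = j mod m) = (i = j)"
      by (metis mod_div_mult_eq)
    have "(ku m n Q * bd m n (\<lambda>t a b. if a = b then 1 else 0) * cadjoint (ku m n Q)) $$ (i,j)
      = (\<Sum>t<n. complex_of_real (Q t (i div m) * Q t (j div m)) * (if i mod m = j mod m then 1 else 0))"
      by (rule conj_entry[OF i j])
    also have "\<dots> = complex_of_real (\<Sum>t<n. Q t (i div m) * Q t (j div m)) * (if i mod m = j mod m then 1 else 0)"
      by (simp add: sum_distrib_right)
    also have "\<dots> = (if i = j then 1 else 0)"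
      using assms bi bj e unfolding colorth_def by auto
    finally show "(ku m n Q * bd m n (\<lambda>t a b. if a = b then 1 else 0) * cadjoint (ku m n Q)) $$ (i,j) = 1\<^sub>m (n * m) $$ (i, j)"
      using i j by simp
  qed (auto simp: ku_adj)
  finally show ?thesis .
qed

lemma ku_unitary:
  assumes "colorth n Q"
  shows "unitary_mat (ku m n Q)"
proof -
  have 1: "ku m n Q * cadjoint (ku m n Q) = 1\<^sub>m (n*m)" by (rule ku_unitary1[OF assms])
  have 2: "cadjoint (ku m n Q) * ku m n Q = 1\<^sub>m (n*m)"
    by (rule mat_mult_left_right_inverse[OF ku_carrier adj_carrier 1])
  show ?thesis unfolding unitary_mat_def using 1 2 ku_carrier by blast
qed

lemma ku_vec:
  assumes i: "i < n*m" and w: "w \<in> carrier_vec (n*m)"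
  shows "(ku m n Q *\<^sub>v w) $ i = (\<Sum>t<n. complex_of_real (Q t (i div m)) * w $ (t*m + i mod m))"
proof -
  note bi = blk_idx[OF i]
  have "(ku m n Q *\<^sub>v w) $ i = (\<Sum>l\<in>{0..<n*m}. ku m n Q $$ (i,l) * w $ l)"
    using i w by (simp add: scalar_prod_def)
  also have "\<dots> = (\<Sum>t<n. \<Sum>a<m. ku m n Q $$ (i,t*m+a) * w $ (t*m+a))"
    by (rule sum_blocks0)
  also have "\<dots> = (\<Sum>t<n. \<Sum>a<m. if a = i mod m then complex_of_real (Q t (i div m)) * w $ (t*m + i mod m) else 0)"
  proof (intro sum.cong refl)
    fix t a assume t: "t \<in> {..<n}" and a: "a \<in> {..<m}"
    have l: "t*m+a < n*m" using t a blk_idx2 by auto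
    show "ku m n Q $$ (i,t*m+a) * w $ (t*m+a) = (if a = i mod m then complex_of_real (Q t (i div m)) * w $ (t*m + i mod m) else 0)"
      using t a i l by (auto simp: ku_def blk_idx2)
  qed
  also have "\<dots> = (\<Sum>t<n. complex_of_real (Q t (i div m)) * w $ (t*m + i mod m))"
    using bi by simp
  finally show ?thesis .
qed

lemma orth_sum_sq:
  assumes "roworth n Q"
  shows "(\<Sum>I<n. (cmod (\<Sum>t<n. complex_of_real (Q t I) * z t))^2) = (\<Sum>t<n. (cmod (z t))^2)"
proof -
  have "complex_of_real (\<Sum>I<n. (cmod (\<Sum>t<n. complex_of_real (Q t I) * z t))^2)
      = (\<Sum>I<n. (\<Sum>t<n. complex_of_real (Q t I) * z t) * cnj (\<Sum>t<n. complex_of_real (Q t I) * z t))"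
    unfolding of_real_sum complex_norm_square by (rule refl)
  also have "\<dots> = (\<Sum>I<n. \<Sum>t'<n. \<Sum>t<n. complex_of_real (Q t I * Q t' I) * (z t * cnj (z t')))"
    by (simp add: sum_distrib_left sum_distrib_right cnj_sum mult_ac)
  also have "\<dots> = (\<Sum>t'<n. \<Sum>I<n. \<Sum>t<n. complex_of_real (Q t I * Q t' I) * (z t * cnj (z t')))"
    by (rule sum.swap)
  also have "\<dots> = (\<Sum>t'<n. \<Sum>t<n. \<Sum>I<n. complex_of_real (Q t I * Q t' I) * (z t * cnj (z t')))"
    by (intro sum.cong refl sum.swap)
  also have "\<dots> = (\<Sum>t'<n. \<Sum>t<n. complex_of_real (\<Sum>I<n. Q t I * Q t' I) * (z t * cnj (z t')))"
    by (simp add: sum_distrib_right)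
  also have "\<dots> = (\<Sum>t'<n. \<Sum>t<n. if t = t' then z t' * cnj (z t') else 0)"
    using assms unfolding roworth_def by (intro sum.cong refl) auto
  also have "\<dots> = (\<Sum>t'<n. z t' * cnj (z t'))"
    by simp
  also have "\<dots> = complex_of_real (\<Sum>t<n. (cmod (z t))^2)"
    unfolding of_real_sum complex_norm_square by (rule refl)
  finally show ?thesis using of_real_eq_iff by blast
qed

lemma cvec_norm_sq: "(cvec_norm v)^2 = (\<Sum>i<dim_vec v. (cmod (v $ i))^2)"
  unfolding cvec_norm_def by (simp add: sum_nonneg)

lemma ku_norm:
  assumes "roworth n Q" and w: "w \<in> carrier_vec (n*m)"
  shows "cvec_norm (ku m n Q *\<^sub>v w) = cvec_norm w"
proof -
  have "(cvec_norm (ku m n Q *\<^sub>v w))^2 = (\<Sum>i<n*m. (cmod ((ku m n Q *\<^sub>v w) $ i))^2)"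
    by (simp add: cvec_norm_sq)
  also have "\<dots> = (\<Sum>I<n. \<Sum>a<m. (cmod ((ku m n Q *\<^sub>v w) $ (I*m+a)))^2)"
    by (rule sum_blocks)
  also have "\<dots> = (\<Sum>I<n. \<Sum>a<m. (cmod (\<Sum>t<n. complex_of_real (Q t I) * w $ (t*m + a)))^2)"
    by (intro sum.cong refl) (simp add: ku_vec[OF _ w] blk_idx2 del: index_mult_mat_vec)
  also have "\<dots> = (\<Sum>a<m. \<Sum>I<n. (cmod (\<Sum>t<n. complex_of_real (Q t I) * w $ (t*m + a)))^2)"
    by (rule sum.swap)
  also have "\<dots> = (\<Sum>a<m. \<Sum>t<n. (cmod (w $ (t*m + a)))^2)"
    by (intro sum.cong refl orth_sum_sq[OF assms(1)])
  also have "\<dots> = (\<Sum>t<n. \<Sum>a<m. (cmod (w $ (t*m + a)))^2)"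
    by (rule sum.swap)
  also have "\<dots> = (\<Sum>i<n*m. (cmod (w $ i))^2)"
    by (rule sum_blocks[symmetric])
  also have "\<dots> = (cvec_norm w)^2" using w by (simp add: cvec_norm_sq)
  finally show ?thesis
    by (metis cvec_norm_def real_sqrt_ge_zero sum_nonneg zero_le_power2 power2_eq_iff_nonneg)
qed



lemma cvec_norm_L2: "cvec_norm v = L2_set (\<lambda>i. cmod (v $ i)) {..<dim_vec v}"
  unfolding cvec_norm_def L2_set_def by simp

lemma cvec_norm_nonneg: "cvec_norm v \<ge> 0"
  unfolding cvec_norm_L2 by simp

lemma cvec_entry_le: "i < dim_vec v \<Longrightarrow> cmod (v $ i) \<le> cvec_norm v"
  unfolding cvec_norm_L2 by (rule member_le_L2_set) auto

lemma cvec_norm_triangle: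
  fixes x y z :: "complex vec"
  assumes "dim_vec x = d" "dim_vec y = d" "dim_vec z = d" "\<And>i. i < d \<Longrightarrow> x $ i = y $ i + z $ i"
  shows "cvec_norm x \<le> cvec_norm y + cvec_norm z"
proof -
  have "cvec_norm x \<le> L2_set (\<lambda>i. cmod (y $ i) + cmod (z $ i)) {..<d}"
    unfolding cvec_norm_L2 assms(1) using assms by (intro L2_set_mono) (auto simp: norm_triangle_ineq)
  also have "\<dots> \<le> cvec_norm y + cvec_norm z"
    unfolding cvec_norm_L2 using assms by (simp add: L2_set_triangle_ineq)
  finally show ?thesis .
qed

lemma cvec_norm_smult: "cvec_norm (c \<cdot>\<^sub>v v) = cmod c * cvec_norm v"
proof -
  have "cvec_norm (c \<cdot>\<^sub>v v) = L2_set (\<lambda>i. cmod c * cmod (v $ i)) {..<dim_vec v}"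
    unfolding cvec_norm_L2 by (intro L2_set_cong) (auto simp: norm_mult)
  also have "\<dots> = cmod c * cvec_norm v"
    unfolding cvec_norm_L2 by (simp add: L2_set_right_distrib)
  finally show ?thesis .
qed

lemma cvec_norm_zero: "cvec_norm v = 0 \<Longrightarrow> i < dim_vec v \<Longrightarrow> v $ i = 0"
  using cvec_entry_le[of i v] by auto

definition L1 :: "complex mat \<Rightarrow> real" where
  "L1 A = (\<Sum>i<dim_row A. \<Sum>j<dim_col A. cmod (A $$ (i,j)))"

lemma L1_nonneg: "L1 A \<ge> 0" unfolding L1_def by (intro sum_nonneg) auto

lemma mat_vec_bound:
  assumes v: "v \<in> carrier_vec (dim_col A)"
  shows "cvec_norm (A *\<^sub>v v) \<le> L1 A * cvec_norm v"
proof -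
  have "cvec_norm (A *\<^sub>v v) \<le> (\<Sum>i<dim_row A. cmod ((A *\<^sub>v v) $ i))"
    unfolding cvec_norm_L2 dim_mult_mat_vec by (rule L2_set_le_sum) simp
  also have "\<dots> \<le> (\<Sum>i<dim_row A. \<Sum>j<dim_col A. cmod (A $$ (i,j)) * cvec_norm v)"
  proof (rule sum_mono)
    fix i assume i: "i \<in> {..<dim_row A}"
    have "cmod ((A *\<^sub>v v) $ i) = cmod (\<Sum>j<dim_col A. A $$ (i,j) * v $ j)"
      using i v by (simp add: scalar_prod_def atLeast0LessThan)
    also have "\<dots> \<le> (\<Sum>j<dim_col A. cmod (A $$ (i,j) * v $ j))" by (rule norm_sum)
    also have "\<dots> \<le> (\<Sum>j<dim_col A. cmod (A $$ (i,j)) * cvec_norm v)"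
      using v by (intro sum_mono) (auto simp: norm_mult intro!: mult_left_mono cvec_entry_le)
    finally show "cmod ((A *\<^sub>v v) $ i) \<le> (\<Sum>j<dim_col A. cmod (A $$ (i,j)) * cvec_norm v)" .
  qed
  also have "\<dots> = L1 A * cvec_norm v" unfolding L1_def by (simp add: sum_distrib_right)
  finally show ?thesis .
qed

lemma op_norm_set_bdd: "bdd_above {cvec_norm (A *\<^sub>v v) | v. v \<in> carrier_vec (dim_col A) \<and> cvec_norm v \<le> 1}"
proof (rule bdd_aboveI[of _ "L1 A"])
  fix x assume "x \<in> {cvec_norm (A *\<^sub>v v) | v. v \<in> carrier_vec (dim_col A) \<and> cvec_norm v \<le> 1}"
  then obtain v where v: "v \<in> carrier_vec (dim_col A)" "cvec_norm v \<le> 1" and x: "x = cvec_norm (A *\<^sub>v v)" by auto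
  have "x \<le> L1 A * cvec_norm v" using mat_vec_bound[OF v(1)] x by simp
  also have "\<dots> \<le> L1 A * 1" using v(2) L1_nonneg by (intro mult_left_mono) auto
  finally show "x \<le> L1 A" by simp
qed

lemma op_norm_ge: "v \<in> carrier_vec (dim_col A) \<Longrightarrow> cvec_norm v \<le> 1 \<Longrightarrow> cvec_norm (A *\<^sub>v v) \<le> op_norm A"
  unfolding op_norm_def by (rule cSup_upper[OF _ op_norm_set_bdd]) auto

lemma op_norm_le:
  assumes "\<And>v. v \<in> carrier_vec (dim_col A) \<Longrightarrow> cvec_norm v \<le> 1 \<Longrightarrow> cvec_norm (A *\<^sub>v v) \<le> K"
  shows "op_norm A \<le> K"
proof -
  have "0\<^sub>v (dim_col A) \<in> carrier_vec (dim_col A)" "cvec_norm (0\<^sub>v (dim_col A)) \<le> 1"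
    by (auto simp: cvec_norm_def)
  then have ne: "{cvec_norm (A *\<^sub>v v) | v. v \<in> carrier_vec (dim_col A) \<and> cvec_norm v \<le> 1} \<noteq> {}" by blast
  show ?thesis unfolding op_norm_def
  proof (rule cSup_least[OF ne])
    fix x assume "x \<in> {cvec_norm (A *\<^sub>v v) | v. v \<in> carrier_vec (dim_col A) \<and> cvec_norm v \<le> 1}"
    then obtain v where "v \<in> carrier_vec (dim_col A)" "cvec_norm v \<le> 1" "x = cvec_norm (A *\<^sub>v v)" by blast
    then show "x \<le> K" using assms by blast
  qed
qed

lemma op_norm_nonneg: "op_norm A \<ge> 0"
proof -
  have "0\<^sub>v (dim_col A) \<in> carrier_vec (dim_col A)" "cvec_norm (0\<^sub>v (dim_col A)) \<le> 1"
    by (auto simp: cvec_norm_def)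
  from op_norm_ge[OF this] show ?thesis using cvec_norm_nonneg order_trans by blast
qed

lemma op_norm_scale:
  assumes v: "v \<in> carrier_vec (dim_col A)"
  shows "cvec_norm (A *\<^sub>v v) \<le> op_norm A * cvec_norm v"
proof (cases "cvec_norm v = 0")
  case True
  then show ?thesis using mat_vec_bound[OF v] by simp
next
  case False
  then have pos: "cvec_norm v > 0" using cvec_norm_nonneg[of v] by simp
  let ?c = "complex_of_real (1 / cvec_norm v)"
  have w: "?c \<cdot>\<^sub>v v \<in> carrier_vec (dim_col A)" using v by simp
  have nw: "cvec_norm (?c \<cdot>\<^sub>v v) = 1" using pos by (simp add: cvec_norm_smult norm_divide)
  have "A *\<^sub>v (?c \<cdot>\<^sub>v v) = ?c \<cdot>\<^sub>v (A *\<^sub>v v)"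
    by (rule mult_mat_vec[OF _ v]) auto
  then have "cvec_norm (A *\<^sub>v (?c \<cdot>\<^sub>v v)) = cvec_norm (A *\<^sub>v v) / cvec_norm v"
    using pos by (simp add: cvec_norm_smult norm_divide)
  moreover have "cvec_norm (A *\<^sub>v (?c \<cdot>\<^sub>v v)) \<le> op_norm A" using op_norm_ge[OF w] nw by simp
  ultimately show ?thesis using pos by (simp add: divide_le_eq)
qed

lemma op_norm_lip:
  assumes A: "A \<in> carrier_mat r c" and B: "B \<in> carrier_mat r c"
  shows "op_norm A \<le> op_norm B + L1 (A - B)"
proof (rule op_norm_le)
  fix v assume v: "v \<in> carrier_vec (dim_col A)" and nv: "cvec_norm v \<le> 1"
  have vB: "v \<in> carrier_vec (dim_col B)" "v \<in> carrier_vec (dim_col (A - B))" using v A B by auto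
  have "cvec_norm (A *\<^sub>v v) \<le> cvec_norm (B *\<^sub>v v) + cvec_norm ((A - B) *\<^sub>v v)"
  proof (rule cvec_norm_triangle)
    show "dim_vec (A *\<^sub>v v) = r" "dim_vec (B *\<^sub>v v) = r" "dim_vec ((A - B) *\<^sub>v v) = r" using A B by auto
    fix i assume "i < r"
    then show "(A *\<^sub>v v) $ i = (B *\<^sub>v v) $ i + ((A - B) *\<^sub>v v) $ i"
      using A B v by (simp add: minus_mult_distrib_mat_vec[OF A B])
  qed
  also have "\<dots> \<le> op_norm B + L1 (A - B) * 1"
  proof -
    have 1: "cvec_norm (B *\<^sub>v v) \<le> op_norm B" by (rule op_norm_ge[OF vB(1) nv])
    have 2: "cvec_norm ((A - B) *\<^sub>v v) \<le> L1 (A - B) * cvec_norm v" by (rule mat_vec_bound[OF vB(2)])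
    have 3: "L1 (A - B) * cvec_norm v \<le> L1 (A - B) * 1" by (rule mult_left_mono[OF nv L1_nonneg])
    show ?thesis using 1 2 3 by linarith
  qed
  finally show "cvec_norm (A *\<^sub>v v) \<le> op_norm B + L1 (A - B)" by simp
qed



lemma bd_vec:
  assumes i: "i < n*m" and w: "w \<in> carrier_vec (n*m)"
  shows "(bd m n G *\<^sub>v w) $ i = (\<Sum>b<m. G (i div m) (i mod m) b * w $ ((i div m)*m + b))"
proof -
  note bi = blk_idx[OF i]
  have "(bd m n G *\<^sub>v w) $ i = (\<Sum>l\<in>{0..<n*m}. bd m n G $$ (i,l) * w $ l)"
    using i w by (simp add: scalar_prod_def)
  also have "\<dots> = (\<Sum>t<n. \<Sum>b<m. bd m n G $$ (i,t*m+b) * w $ (t*m+b))"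
    by (rule sum_blocks0)
  also have "\<dots> = (\<Sum>t<n. if t = i div m then (\<Sum>b<m. G (i div m) (i mod m) b * w $ ((i div m)*m + b)) else 0)"
  proof (intro sum.cong refl)
    fix t assume t: "t \<in> {..<n}"
    show "(\<Sum>b<m. bd m n G $$ (i,t*m+b) * w $ (t*m+b)) = (if t = i div m then (\<Sum>b<m. G (i div m) (i mod m) b * w $ ((i div m)*m + b)) else 0)"
    proof (cases "t = i div m")
      case True
      have "(\<Sum>b<m. bd m n G $$ (i,t*m+b) * w $ (t*m+b)) = (\<Sum>b<m. G (i div m) (i mod m) b * w $ ((i div m)*m + b))"
      proof (intro sum.cong refl)
        fix b assume b: "b \<in> {..<m}"
        have l: "(i div m)*m+b < n*m" using bi b blk_idx2 by auto
        show "bd m n G $$ (i,t*m+b) * w $ (t*m+b) = G (i div m) (i mod m) b * w $ ((i div m)*m + b)"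
          using i b l bi True by (auto simp: bd_def blk_idx2)
      qed
      then show ?thesis using True by simp
    next
      case False
      have "bd m n G $$ (i,t*m+b) = 0" if b: "b < m" for b
      proof -
        have l: "t*m+b < n*m" using t b blk_idx2 by auto
        show ?thesis using False i l b by (auto simp: bd_def blk_idx2)
      qed
      then show ?thesis using False by simp
    qed
  qed
  also have "\<dots> = (\<Sum>b<m. G (i div m) (i mod m) b * w $ ((i div m)*m + b))"
    using bi by simp
  finally show ?thesis .
qed

lemma bd_norm:
  assumes K: "K \<ge> 0"
    and G: "\<And>t z. t < n \<Longrightarrow> (\<Sum>a<m. (cmod (\<Sum>b<m. G t a b * z b))^2) \<le> K^2 * (\<Sum>b<m. (cmod (z b))^2)"
    and w: "w \<in> carrier_vec (n*m)"
  shows "cvec_norm (bd m n G *\<^sub>v w) \<le> K * cvec_norm w"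
proof -
  have "(cvec_norm (bd m n G *\<^sub>v w))^2 = (\<Sum>i<n*m. (cmod ((bd m n G *\<^sub>v w) $ i))^2)"
    by (simp add: cvec_norm_sq)
  also have "\<dots> = (\<Sum>I<n. \<Sum>a<m. (cmod ((bd m n G *\<^sub>v w) $ (I*m+a)))^2)"
    by (rule sum_blocks)
  also have "\<dots> = (\<Sum>I<n. \<Sum>a<m. (cmod (\<Sum>b<m. G I a b * w $ (I*m + b)))^2)"
  proof (intro sum.cong refl)
    fix I a assume I: "I \<in> {..<n}" and a: "a \<in> {..<m}"
    have l: "I*m+a < n*m" and d: "(I*m+a) div m = I" and md: "(I*m+a) mod m = a"
      using I a blk_idx2 by auto
    show "(cmod ((bd m n G *\<^sub>v w) $ (I*m+a)))^2 = (cmod (\<Sum>b<m. G I a b * w $ (I*m + b)))^2"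
      by (simp only: bd_vec[OF l w] d md)
  qed
  also have "\<dots> \<le> (\<Sum>I<n. K^2 * (\<Sum>b<m. (cmod (w $ (I*m + b)))^2))"
    by (rule sum_mono, rule G) simp
  also have "\<dots> = K^2 * (\<Sum>I<n. \<Sum>b<m. (cmod (w $ (I*m + b)))^2)"
    by (simp only: sum_distrib_left)
  also have "\<dots> = K^2 * (\<Sum>i<n*m. (cmod (w $ i))^2)"
    by (simp only: sum_blocks)
  also have "\<dots> = (K * cvec_norm w)^2"
  proof -
    have "dim_vec w = n*m" using w by simp
    then show ?thesis by (simp only: cvec_norm_sq power_mult_distrib)
  qed
  finally have sq: "(cvec_norm (bd m n G *\<^sub>v w))^2 \<le> (K * cvec_norm w)^2" .
  show ?thesis by (rule power2_le_imp_le[OF sq mult_nonneg_nonneg[OF K cvec_norm_nonneg]])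
qed

lemma conj_norm:
  assumes K: "K \<ge> 0"
    and G: "\<And>t z. t < n \<Longrightarrow> (\<Sum>a<m. (cmod (\<Sum>b<m. G t a b * z b))^2) \<le> K^2 * (\<Sum>b<m. (cmod (z b))^2)"
    and ro: "roworth n Q" and co: "colorth n Q"
  shows "op_norm (ku m n Q * bd m n G * cadjoint (ku m n Q)) \<le> K"
proof (rule op_norm_le)
  fix v assume v: "v \<in> carrier_vec (dim_col (ku m n Q * bd m n G * cadjoint (ku m n Q)))"
    and nv: "cvec_norm v \<le> 1"
  have v': "v \<in> carrier_vec (n*m)" using v by (simp add: ku_adj)
  have ro2: "roworth n (\<lambda>s t. Q t s)" using co unfolding roworth_def colorth_def by auto
  have c1: "ku m n Q * bd m n G \<in> carrier_mat (n*m) (n*m)"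
    by (rule mult_carrier_mat[OF ku_carrier bd_carrier])
  have c2: "cadjoint (ku m n Q) *\<^sub>v v \<in> carrier_vec (n*m)"
    by (rule mult_mat_vec_carrier[OF adj_carrier v'])
  have c3: "bd m n G *\<^sub>v (cadjoint (ku m n Q) *\<^sub>v v) \<in> carrier_vec (n*m)"
    by (rule mult_mat_vec_carrier[OF bd_carrier c2])
  have "(ku m n Q * bd m n G * cadjoint (ku m n Q)) *\<^sub>v v = (ku m n Q * bd m n G) *\<^sub>v (cadjoint (ku m n Q) *\<^sub>v v)"
    by (rule assoc_mult_mat_vec[OF c1 adj_carrier v'])
  also have "\<dots> = ku m n Q *\<^sub>v (bd m n G *\<^sub>v (cadjoint (ku m n Q) *\<^sub>v v))"
    by (rule assoc_mult_mat_vec[OF ku_carrier bd_carrier c2])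
  finally have "cvec_norm ((ku m n Q * bd m n G * cadjoint (ku m n Q)) *\<^sub>v v) = cvec_norm (bd m n G *\<^sub>v (cadjoint (ku m n Q) *\<^sub>v v))"
    using ku_norm[OF ro c3] by simp
  also have "\<dots> \<le> K * cvec_norm (cadjoint (ku m n Q) *\<^sub>v v)"
    by (rule bd_norm[OF K G c2])
  also have "cvec_norm (cadjoint (ku m n Q) *\<^sub>v v) = cvec_norm v"
    unfolding ku_adj_ku by (rule ku_norm[OF ro2 v'])
  also have "K * cvec_norm v \<le> K * 1" using nv K by (intro mult_left_mono) auto
  finally show "cvec_norm ((ku m n Q * bd m n G * cadjoint (ku m n Q)) *\<^sub>v v) \<le> K" by simp
qed



definition Bmat :: "nat \<Rightarrow> nat \<Rightarrow> (nat \<Rightarrow> nat \<Rightarrow> real) \<Rightarrow> (nat \<Rightarrow> nat \<Rightarrow> nat \<Rightarrow> complex) \<Rightarrow> complex mat" where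
  "Bmat m n Q GA = mat (n*m-m) (n*m-m) (\<lambda>(i,j). \<Sum>t<n. complex_of_real (Q t ((i+m) div m) * Q t ((j+m) div m)) * GA t ((i+m) mod m) ((j+m) mod m))"

lemma decomp:
  assumes n: "0 < n" and f0: "f0 \<in> carrier_mat m m" and co: "colorth n Q"
    and GA: "\<And>t a b. t<n \<Longrightarrow> a<m \<Longrightarrow> b<m \<Longrightarrow> Q t 0 \<noteq> 0 \<Longrightarrow> GA t a b = f0 $$ (a,b)"
    and GF: "\<And>t a b. t<n \<Longrightarrow> a<m \<Longrightarrow> b<m \<Longrightarrow> GF t a b = GA t a b + GE t a b"
  shows "ku m n Q * bd m n GF * cadjoint (ku m n Q) - four_block_mat f0 (0\<^sub>m m (n*m - m)) (0\<^sub>m (n*m - m) m) (Bmat m n Q GA)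
     = ku m n Q * bd m n GE * cadjoint (ku m n Q)"
proof -
  have nm: "m + (n*m - m) = n*m"
  proof -
    have "m \<le> n*m" using n by simp
    then show ?thesis by simp
  qed
  have fbc: "four_block_mat f0 (0\<^sub>m m (n*m - m)) (0\<^sub>m (n*m - m) m) (Bmat m n Q GA) \<in> carrier_mat (n*m) (n*m)"
    using four_block_carrier_mat[OF f0, of "Bmat m n Q GA" "n*m-m" "n*m-m"] nm by (simp add: Bmat_def)
  let ?S = "\<lambda>G i j. (\<Sum>t<n. complex_of_real (Q t (i div m) * Q t (j div m)) * G t (i mod m) (j mod m))"
  have special: "?S GA i j = complex_of_real (\<Sum>t<n. Q t (i div m) * Q t (j div m)) * f0 $$ (i mod m, j mod m)"
    if i: "i < n*m" and j: "j < n*m" and z: "i div m = 0 \<or> j div m = 0" for i j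
  proof -
    note bi = blk_idx[OF i] and bj = blk_idx[OF j]
    have "?S GA i j = (\<Sum>t<n. complex_of_real (Q t (i div m) * Q t (j div m)) * f0 $$ (i mod m, j mod m))"
    proof (intro sum.cong refl)
      fix t assume t: "t \<in> {..<n}"
      show "complex_of_real (Q t (i div m) * Q t (j div m)) * GA t (i mod m) (j mod m) =
            complex_of_real (Q t (i div m) * Q t (j div m)) * f0 $$ (i mod m, j mod m)"
      proof (cases "Q t 0 = 0")
        case True then show ?thesis using z by auto
      next
        case False then show ?thesis using GA[of t "i mod m" "j mod m"] t bi bj by simp
      qed
    qed
    also have "\<dots> = complex_of_real (\<Sum>t<n. Q t (i div m) * Q t (j div m)) * f0 $$ (i mod m, j mod m)"
      by (simp add: sum_distrib_right)
    finally show ?thesis .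
  qed
  have FB: "four_block_mat f0 (0\<^sub>m m (n*m - m)) (0\<^sub>m (n*m - m) m) (Bmat m n Q GA) $$ (i,j) = ?S GA i j"
    if i: "i < n*m" and j: "j < n*m" for i j
  proof -
    note bi = blk_idx[OF i] and bj = blk_idx[OF j]
    have dd: "dim_row f0 = m" "dim_col f0 = m" "dim_row (Bmat m n Q GA) = n*m-m" "dim_col (Bmat m n Q GA) = n*m-m"
      using f0 by (auto simp: Bmat_def)
    have e: "four_block_mat f0 (0\<^sub>m m (n*m - m)) (0\<^sub>m (n*m - m) m) (Bmat m n Q GA) $$ (i,j) =
      (if i < m then if j < m then f0 $$ (i,j) else (0\<^sub>m m (n*m - m)) $$ (i,j - m)
       else if j < m then (0\<^sub>m (n*m - m) m) $$ (i - m, j) else Bmat m n Q GA $$ (i - m, j - m))"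
      using i j nm by (subst index_mat_four_block) (auto simp: dd)
    show ?thesis
    proof (cases "i < m")
      case iT: True
      have id: "i div m = 0" "i mod m = i" using iT by auto
      show ?thesis
      proof (cases "j < m")
        case True
        have jd: "j div m = 0" "j mod m = j" using True by auto
        have "(\<Sum>t<n. Q t 0 * Q t 0) = 1" using co n unfolding colorth_def by auto
        then show ?thesis using special[OF i j] e iT True id jd by simp
      next
        case False
        have jd: "j div m \<noteq> 0" using False bj(2,3) by (metis add.left_neutral mult_zero_left)
        have "(\<Sum>t<n. Q t 0 * Q t (j div m)) = 0" using co n bj jd unfolding colorth_def by auto
        then show ?thesis using special[OF i j] e iT False id jd i j by simp
      qed
    next
      case iF: False
      have id: "i div m \<noteq> 0" using iF bi(2,3) by (metis add.left_neutral mult_zero_left)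
      show ?thesis
      proof (cases "j < m")
        case True
        have jd: "j div m = 0" using True by auto
        have "(\<Sum>t<n. Q t (i div m) * Q t 0) = 0" using co n bi id unfolding colorth_def by auto
        then show ?thesis using special[OF i j] e iF True id jd i j by simp
      next
        case False
        have a: "i - m + m = i" "j - m + m = j" using iF False by auto
        have b: "(i - m) mod m = i mod m" "(j - m) mod m = j mod m"
          using a by (metis mod_add_self2)+
        have "Bmat m n Q GA $$ (i - m, j - m) = ?S GA i j"
          using i j iF False unfolding Bmat_def by (simp add: a b)
        then show ?thesis using e iF False by simp
      qed
    qed
  qed
  show ?thesis
  proof (rule eq_matI)
    show "dim_row (ku m n Q * bd m n GF * cadjoint (ku m n Q) - four_block_mat f0 (0\<^sub>m m (n*m - m)) (0\<^sub>m (n*m - m) m) (Bmat m n Q GA))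
      = dim_row (ku m n Q * bd m n GE * cadjoint (ku m n Q))"
      using fbc by (simp del: index_mat_four_block)
    show "dim_col (ku m n Q * bd m n GF * cadjoint (ku m n Q) - four_block_mat f0 (0\<^sub>m m (n*m - m)) (0\<^sub>m (n*m - m) m) (Bmat m n Q GA))
      = dim_col (ku m n Q * bd m n GE * cadjoint (ku m n Q))"
      using fbc by (simp add: ku_adj del: index_mat_four_block)
    fix i j assume "i < dim_row (ku m n Q * bd m n GE * cadjoint (ku m n Q))" "j < dim_col (ku m n Q * bd m n GE * cadjoint (ku m n Q))"
    then have i: "i < n*m" and j: "j < n*m" by (auto simp: ku_adj)
    note bi = blk_idx[OF i] and bj = blk_idx[OF j]
    have sum: "?S GF i j = ?S GA i j + ?S GE i j"
      unfolding sum.distrib[symmetric]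
      by (intro sum.cong refl) (simp add: GF bi bj distrib_left)
    have "(ku m n Q * bd m n GF * cadjoint (ku m n Q) - four_block_mat f0 (0\<^sub>m m (n*m - m)) (0\<^sub>m (n*m - m) m) (Bmat m n Q GA)) $$ (i,j)
      = (ku m n Q * bd m n GF * cadjoint (ku m n Q)) $$ (i,j) - four_block_mat f0 (0\<^sub>m m (n*m - m)) (0\<^sub>m (n*m - m) m) (Bmat m n Q GA) $$ (i,j)"
      using fbc i j by (intro index_minus_mat(1)) auto
    also have "\<dots> = ?S GE i j"
      unfolding conj_entry[OF i j] FB[OF i j] sum by simp
    also have "\<dots> = (ku m n Q * bd m n GE * cadjoint (ku m n Q)) $$ (i,j)"
      unfolding conj_entry[OF i j] ..
    finally show "(ku m n Q * bd m n GF * cadjoint (ku m n Q) - four_block_mat f0 (0\<^sub>m m (n*m - m)) (0\<^sub>m (n*m - m) m) (Bmat m n Q GA)) $$ (i,j)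
      = (ku m n Q * bd m n GE * cadjoint (ku m n Q)) $$ (i,j)" .
  qed
qed



definition d :: "nat \<Rightarrow> nat \<Rightarrow> real" where "d s t = (if s = t then 1 else 0)"

definition ralpha :: "(nat \<Rightarrow> real) \<Rightarrow> nat \<Rightarrow> real" where
  "ralpha h t = d t 0 + (h 0 * d t 0 - h t) / (1 + h 0)"
definition rbeta :: "(nat \<Rightarrow> real) \<Rightarrow> nat \<Rightarrow> real" where
  "rbeta h t = - h t + (h 0 * h t - d t 0) / (1 + h 0)"
definition rot :: "(nat \<Rightarrow> real) \<Rightarrow> nat \<Rightarrow> nat \<Rightarrow> real" where
  "rot h s t = d s t + ralpha h t * h s + rbeta h t * d s 0"

lemma rot_col0: "h 0 \<ge> 0 \<Longrightarrow> rot h s 0 = h s"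
  unfolding rot_def ralpha_def rbeta_def d_def by (auto simp: field_simps)

lemma sum_d1: assumes "I < n" shows "(\<Sum>s<n. d s I * g s) = g I"
proof -
  have "(\<Sum>s<n. d s I * g s) = (\<Sum>s<n. if s = I then g s else 0)"
    unfolding d_def by (intro sum.cong refl) auto
  then show ?thesis using assms by simp
qed

lemma d_sym: "d s t = d t s" unfolding d_def by auto
lemma d_refl: "d s s = 1" unfolding d_def by auto

lemma rot_expand:
  assumes I: "I < n" and J: "J < n" and n: "0 < n" and hs: "(\<Sum>t<n. (h t)^2) = 1"
  shows "(\<Sum>s<n. rot h s I * rot h s J) =
     d I J + ralpha h J * h I + rbeta h J * d I 0 + ralpha h I * h J + ralpha h I * ralpha h J
     + ralpha h I * rbeta h J * h 0 + rbeta h I * d J 0 + rbeta h I * ralpha h J * h 0 + rbeta h I * rbeta h J"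
proof -
  let ?a = "ralpha h I" and ?b = "rbeta h I" and ?a' = "ralpha h J" and ?b' = "rbeta h J"
  have "(\<Sum>s<n. rot h s I * rot h s J) = (\<Sum>s<n. d s I * d s J + ?a' * (d s I * h s) + ?b' * (d s I * d s 0)
     + ?a * (d s J * h s) + ?a * ?a' * (h s)^2 + ?a * ?b' * (d s 0 * h s) + ?b * (d s 0 * d s J)
     + ?b * ?a' * (d s 0 * h s) + ?b * ?b' * (d s 0 * d s 0))"
    unfolding rot_def by (intro sum.cong refl) (simp add: algebra_simps power2_eq_square d_def)
  also have "\<dots> = d I J + ?a' * h I + ?b' * d I 0 + ?a * h J + ?a * ?a' * 1 + ?a * ?b' * h 0
     + ?b * d J 0 + ?b * ?a' * h 0 + ?b * ?b' * 1"
    using I J n hs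
    by (simp add: sum.distrib sum_distrib_left[symmetric] sum_d1 d_refl d_sym[of 0 J])
  finally show ?thesis by simp
qed

lemma rot_colorth:
  assumes n: "0 < n" and h0: "h 0 \<ge> 0" and hs: "(\<Sum>t<n. (h t)^2) = 1"
  shows "colorth n (rot h)"
  unfolding colorth_def
proof (intro allI impI)
  fix I J assume I: "I < n" and J: "J < n"
  have p: "1 + h 0 \<noteq> 0" using h0 by linarith
  define k where "k = - 1 / (1 + h 0)"
  have kk: "k * (1 + h 0) = -1" using p unfolding k_def by simp
  have a0: "ralpha h 0 = 1" and b0: "rbeta h 0 = -1"
    using p unfolding ralpha_def rbeta_def d_def by (auto simp: field_simps)
  have an: "ralpha h t = k * h t" and bn: "rbeta h t = k * h t" if "t \<noteq> 0" for t
    using p that unfolding ralpha_def rbeta_def d_def k_def by (auto simp: field_simps)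
  show "(\<Sum>t<n. rot h t I * rot h t J) = (if I = J then 1 else 0)"
    unfolding rot_expand[OF I J n hs]
  proof (cases "I = 0"; cases "J = 0")
    assume c: "I = 0" "J = 0"
    then show "d I J + ralpha h J * h I + rbeta h J * d I 0 + ralpha h I * h J + ralpha h I * ralpha h J
     + ralpha h I * rbeta h J * h 0 + rbeta h I * d J 0 + rbeta h I * ralpha h J * h 0 + rbeta h I * rbeta h J = (if I = J then 1 else 0)"
      by (simp add: a0 b0 d_def)
  next
    assume c: "I = 0" "J \<noteq> 0"
    then have "d I J + ralpha h J * h I + rbeta h J * d I 0 + ralpha h I * h J + ralpha h I * ralpha h J
     + ralpha h I * rbeta h J * h 0 + rbeta h I * d J 0 + rbeta h I * ralpha h J * h 0 + rbeta h I * rbeta h J = h J * (k * (1 + h 0) + 1)"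
      by (simp add: a0 b0 an bn d_def algebra_simps)
    then show "d I J + ralpha h J * h I + rbeta h J * d I 0 + ralpha h I * h J + ralpha h I * ralpha h J
     + ralpha h I * rbeta h J * h 0 + rbeta h I * d J 0 + rbeta h I * ralpha h J * h 0 + rbeta h I * rbeta h J = (if I = J then 1 else 0)"
      using kk c by (simp add: d_def)
  next
    assume c: "I \<noteq> 0" "J = 0"
    then have "d I J + ralpha h J * h I + rbeta h J * d I 0 + ralpha h I * h J + ralpha h I * ralpha h J
     + ralpha h I * rbeta h J * h 0 + rbeta h I * d J 0 + rbeta h I * ralpha h J * h 0 + rbeta h I * rbeta h J = h I * (k * (1 + h 0) + 1)"
      by (simp add: a0 b0 an bn d_def algebra_simps)
    then show "d I J + ralpha h J * h I + rbeta h J * d I 0 + ralpha h I * h J + ralpha h I * ralpha h J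
     + ralpha h I * rbeta h J * h 0 + rbeta h I * d J 0 + rbeta h I * ralpha h J * h 0 + rbeta h I * rbeta h J = (if I = J then 1 else 0)"
      using kk c by (simp add: d_def)
  next
    assume c: "I \<noteq> 0" "J \<noteq> 0"
    then have "d I J + ralpha h J * h I + rbeta h J * d I 0 + ralpha h I * h J + ralpha h I * ralpha h J
     + ralpha h I * rbeta h J * h 0 + rbeta h I * d J 0 + rbeta h I * ralpha h J * h 0 + rbeta h I * rbeta h J = d I J + 2 * k * h I * h J * (1 + k * (1 + h 0))"
      by (simp add: a0 b0 an bn d_def algebra_simps)
    then show "d I J + ralpha h J * h I + rbeta h J * d I 0 + ralpha h I * h J + ralpha h I * ralpha h J
     + ralpha h I * rbeta h J * h 0 + rbeta h I * d J 0 + rbeta h I * ralpha h J * h 0 + rbeta h I * rbeta h J = (if I = J then 1 else 0)"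
      using kk c by (simp add: d_def)
  qed
qed



lemma colorth_roworth:
  assumes co: "colorth n Q"
  shows "roworth n Q"
proof -
  define M :: "real mat" where "M = mat n n (\<lambda>(i,j). Q i j)"
  have Mc: "M \<in> carrier_mat n n" and Mtc: "transpose_mat M \<in> carrier_mat n n" unfolding M_def by auto
  have "transpose_mat M * M = 1\<^sub>m n"
  proof (rule eq_matI)
    fix I J assume "I < dim_row (1\<^sub>m n)" "J < dim_col (1\<^sub>m n)"
    then have I: "I < n" and J: "J < n" by auto
    have "(transpose_mat M * M) $$ (I,J) = (\<Sum>t\<in>{0..<n}. M $$ (t,I) * M $$ (t,J))"
      using I J Mc by (simp add: scalar_prod_def)
    also have "\<dots> = (\<Sum>t<n. Q t I * Q t J)"
      using I J unfolding M_def by (simp add: atLeast0LessThan)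
    also have "\<dots> = 1\<^sub>m n $$ (I,J)" using co I J unfolding colorth_def by simp
    finally show "(transpose_mat M * M) $$ (I,J) = 1\<^sub>m n $$ (I,J)" .
  qed (use Mc in auto)
  then have MM: "M * transpose_mat M = 1\<^sub>m n"
    by (rule mat_mult_left_right_inverse[OF Mtc Mc])
  show ?thesis unfolding roworth_def
  proof (intro allI impI)
    fix s t assume s: "s < n" and t: "t < n"
    have "(\<Sum>I<n. Q s I * Q t I) = (\<Sum>I\<in>{0..<n}. M $$ (s,I) * M $$ (t,I))"
      using s t unfolding M_def by (simp add: atLeast0LessThan)
    also have "\<dots> = (M * transpose_mat M) $$ (s,t)"
      using s t Mc by (simp add: scalar_prod_def)
    also have "\<dots> = (if s = t then 1 else 0)" using MM s t by simp
    finally show "(\<Sum>I<n. Q s I * Q t I) = (if s = t then 1 else 0)" .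
  qed
qed

lemma op_norm_diff:
  assumes A: "A \<in> carrier_mat r c" and B: "B \<in> carrier_mat r c"
  shows "\<bar>op_norm A - op_norm B\<bar> \<le> (\<Sum>i<r. \<Sum>j<c. cmod (A $$ (i,j) - B $$ (i,j)))"
proof -
  have L1: "L1 (A - B) = (\<Sum>i<r. \<Sum>j<c. cmod (A $$ (i,j) - B $$ (i,j)))"
    unfolding L1_def using A B by (intro sum.cong refl) auto
  have L2: "L1 (B - A) = (\<Sum>i<r. \<Sum>j<c. cmod (A $$ (i,j) - B $$ (i,j)))"
    unfolding L1_def using A B by (intro sum.cong refl) (auto simp: norm_minus_commute)
  show ?thesis using op_norm_lip[OF A B] op_norm_lip[OF B A] L1 L2 by linarith
qed



lemma op_norm_cont:
  fixes f :: "'x::metric_space \<Rightarrow> complex mat"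
  assumes mc: "mat_cont m f"
  shows "continuous_on UNIV (\<lambda>x. op_norm (f x - f x0))"
proof -
  have fc: "\<And>x. f x \<in> carrier_mat m m" and ec: "\<And>i j. i<m \<Longrightarrow> j<m \<Longrightarrow> continuous_on UNIV (\<lambda>x. f x $$ (i,j))"
    using mc unfolding mat_cont_def by auto
  have "isCont (\<lambda>x. op_norm (f x - f x0)) x" for x
  proof -
    let ?\<psi> = "\<lambda>x'. (\<Sum>i<m. \<Sum>j<m. cmod (f x' $$ (i,j) - f x $$ (i,j)))"
    have ic: "isCont (\<lambda>x. f x $$ (i,j)) x" if "i<m" "j<m" for i j
      using ec[OF that] continuous_on_eq_continuous_at[OF open_UNIV] by blast
    have "(?\<psi> \<longlongrightarrow> (\<Sum>i<m. \<Sum>j<m. cmod (f x $$ (i,j) - f x $$ (i,j)))) (at x)"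
      by (intro tendsto_sum tendsto_norm tendsto_diff tendsto_const) (use ic isCont_def in blast)
    then have psi: "(?\<psi> \<longlongrightarrow> 0) (at x)" by simp
    have bound: "norm (op_norm (f x' - f x0) - op_norm (f x - f x0)) \<le> ?\<psi> x'" for x'
    proof -
      have A: "f x' - f x0 \<in> carrier_mat m m" and B: "f x - f x0 \<in> carrier_mat m m"
        by (simp_all add: minus_carrier_mat fc)
      have "(\<Sum>i<m. \<Sum>j<m. cmod ((f x' - f x0) $$ (i,j) - (f x - f x0) $$ (i,j))) = ?\<psi> x'"
      proof (intro sum.cong refl)
        fix i j assume "i \<in> {..<m}" "j \<in> {..<m}"
        moreover have "dim_row (f x0) = m" "dim_col (f x0) = m" using fc[of x0] by auto
        ultimately show "cmod ((f x' - f x0) $$ (i,j) - (f x - f x0) $$ (i,j)) = cmod (f x' $$ (i,j) - f x $$ (i,j))"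
          by simp
      qed
      then show ?thesis using op_norm_diff[OF A B] by simp
    qed
    have "((\<lambda>x'. op_norm (f x' - f x0) - op_norm (f x - f x0)) \<longlongrightarrow> 0) (at x)"
      by (rule Lim_null_comparison[OF _ psi]) (use bound in auto)
    then show ?thesis unfolding isCont_def by (rule LIM_zero_cancel)
  qed
  then show ?thesis by (intro continuous_at_imp_continuous_on) auto
qed



theorem corollary3p3:
  fixes f :: "'x::metric_space \<Rightarrow> complex mat"
    and lam :: "nat \<Rightarrow> 'y::metric_space \<Rightarrow> 'x"
    and m n :: nat and \<epsilon> \<eta> :: real and x0 :: 'x
  assumes "compact (UNIV :: 'x set)" and "compact (UNIV :: 'y set)"
    and "\<forall>s<n. continuous_on UNIV (lam s)"
    and "mat_cont m f"
    and "\<epsilon> > 0" and "\<eta> > 0"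
    and "\<forall>x y. dist x y < 2 * \<eta> \<longrightarrow> op_norm (f x - f y) < \<epsilon>"
    and "\<forall>y. \<exists>s<n. lam s y \<in> ball x0 \<eta>"
  shows "\<exists>u b. mat_cont (n*m) u \<and> (\<forall>y. unitary_mat (u y)) \<and> mat_cont (n*m - m) b \<and>
     sup_norm (\<lambda>y. u y * diag_hom m n lam f y * cadjoint (u y)
        - four_block_mat (f x0) (0\<^sub>m m (n*m - m)) (0\<^sub>m (n*m - m) m) (b y)) < \<epsilon>"
proof -
  note cX = assms(1) and cY = assms(2) and lc = assms(3) and mc = assms(4) and ep = assms(5)
    and et = assms(6) and unif = assms(7) and cov = assms(8)
  have fc: "\<And>x. f x \<in> carrier_mat m m" and ec: "\<And>i j. i<m \<Longrightarrow> j<m \<Longrightarrow> continuous_on UNIV (\<lambda>x. f x $$ (i,j))"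
    using mc unfolding mat_cont_def by auto
  have n: "0 < n" using cov by (metis not_less0 neq0_conv)
  define ds where "ds s y = dist (lam s y) x0" for s y
  have dsc: "continuous_on UNIV (\<lambda>y. ds s y)" if "s < n" for s
    unfolding ds_def using lc that by (intro continuous_intros) auto
  have ds0: "ds s y \<ge> 0" for s y unfolding ds_def by simp
  define \<mu> where "\<mu> y = (\<Sum>s<n. max 0 (\<eta> - ds s y))" for y
  have \<mu>c: "continuous_on UNIV \<mu>"
    unfolding \<mu>_def by (intro continuous_on_sum continuous_on_max continuous_on_const continuous_on_diff dsc) auto
  have \<mu>pos: "\<mu> y > 0" for y
  proof -
    obtain s where s: "s < n" "lam s y \<in> ball x0 \<eta>" using cov by blast
    have "0 < max 0 (\<eta> - ds s y)" using s unfolding ds_def by (simp add: dist_commute)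
    also have "\<dots> \<le> \<mu> y" unfolding \<mu>_def using s by (intro member_le_sum) auto
    finally show ?thesis .
  qed
  obtain ymin where ymin: "\<And>y. \<mu> ymin \<le> \<mu> y"
    using continuous_attains_inf[OF cY _ \<mu>c] by auto
  define \<delta> where "\<delta> = \<mu> ymin"
  have \<delta>: "\<delta> > 0" unfolding \<delta>_def by (rule \<mu>pos)
  have near: "\<exists>s<n. ds s y \<le> \<eta> - \<delta> / n" for y
  proof (rule ccontr)
    assume "\<not> ?thesis"
    then have lt: "\<And>s. s < n \<Longrightarrow> max 0 (\<eta> - ds s y) < \<delta> / n"
      using \<delta> n by (auto simp: max_def)
    have "\<mu> y < (\<Sum>s<n. \<delta> / n)" unfolding \<mu>_def using n by (intro sum_strict_mono lt) auto
    also have "\<dots> = \<delta>" using n by simp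
    finally show False using ymin[of y] unfolding \<delta>_def by simp
  qed
  define r1 where "r1 = \<eta> - \<delta> / (2 * n)"
  define r2 where "r2 = \<eta> - \<delta> / (4 * n)"
  have dn: "\<delta> / n > 0" using \<delta> n by simp
  have r12: "\<eta> - \<delta> / n < r1" "r1 < r2" "r2 < \<eta>"
    unfolding r1_def r2_def using dn n \<delta> by (auto simp: field_simps)
  have r1pos: "0 < r1"
  proof -
    obtain s where "s < n" "ds s undefined \<le> \<eta> - \<delta> / n" using near by blast
    then show ?thesis using ds0[of s undefined] r12 by linarith
  qed
  define \<phi> where "\<phi> x = op_norm (f x - f x0)" for x
  have \<phi>c: "continuous_on (cball x0 r2) \<phi>"
    unfolding \<phi>_def by (rule continuous_on_subset[OF op_norm_cont[OF mc]]) auto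
  have cb: "compact (cball x0 r2)" using cX by (simp add: compact_Int_closed[OF cX closed_cball, simplified])
  have cbne: "cball x0 r2 \<noteq> {}" using r1pos r12 by auto
  obtain xm where xm: "xm \<in> cball x0 r2" "\<And>x. x \<in> cball x0 r2 \<Longrightarrow> \<phi> x \<le> \<phi> xm"
    using continuous_attains_sup[OF cb cbne \<phi>c] by auto
  define K where "K = max (\<phi> xm) 0"
  have K0: "K \<ge> 0" unfolding K_def by simp
  have Keps: "K < \<epsilon>"
  proof -
    have "dist xm x0 < 2 * \<eta>" using xm(1) r12 et by (simp add: dist_commute)
    then have "\<phi> xm < \<epsilon>" using unif unfolding \<phi>_def by blast
    then show ?thesis unfolding K_def using ep by simp
  qed
  have Kb: "op_norm (f x - f x0) \<le> K" if "dist x0 x \<le> r2" for x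
    using xm(2)[of x] that unfolding K_def \<phi>_def by auto
  define g where "g s y = max 0 (r1 - ds s y)" for s y
  have gc: "continuous_on UNIV (\<lambda>y. g s y)" if "s < n" for s
    unfolding g_def by (intro continuous_on_max continuous_on_const continuous_on_diff dsc that)
  have g0: "g s y \<ge> 0" for s y unfolding g_def by simp
  define Gn where "Gn y = sqrt (\<Sum>t<n. (g t y)^2)" for y
  have Gpos: "Gn y > 0" for y
  proof -
    obtain s where s: "s < n" "ds s y \<le> \<eta> - \<delta> / n" using near by blast
    then have "0 < (g s y)^2" unfolding g_def using r12 by auto
    also have "\<dots> \<le> (\<Sum>t<n. (g t y)^2)" using s by (intro member_le_sum) auto
    finally show ?thesis unfolding Gn_def by simp
  qed
  have Gc: "continuous_on UNIV Gn"
    unfolding Gn_def by (intro continuous_on_sum continuous_intros gc) auto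
  define h where "h y s = g s y / Gn y" for y s
  have hc: "continuous_on UNIV (\<lambda>y. h y s)" if "s < n" for s
    unfolding h_def using Gpos by (intro continuous_on_divide gc that Gc) (auto simp: less_le)
  have h0: "h y s \<ge> 0" for y s unfolding h_def using g0 Gpos by (simp add: less_le)
  have hs: "(\<Sum>t<n. (h y t)^2) = 1" for y
  proof -
    have "(\<Sum>t<n. (h y t)^2) = (\<Sum>t<n. (g t y)^2) / (Gn y)^2"
      unfolding h_def by (simp add: power_divide sum_divide_distrib)
    also have "(Gn y)^2 = (\<Sum>t<n. (g t y)^2)" unfolding Gn_def by (simp add: sum_nonneg)
    finally show ?thesis using Gpos[of y] unfolding Gn_def by simp
  qed
  have hnz: "ds s y < r1" if "h y s \<noteq> 0" for s y
    using that unfolding h_def g_def by (auto simp: max_def split: if_splits)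
  define c where "c s y = min 1 (max 0 ((r2 - ds s y) / (r2 - r1)))" for s y
  have cc: "continuous_on UNIV (\<lambda>y. c s y)" if "s < n" for s
    unfolding c_def using r12 by (intro continuous_intros dsc that) auto
  have c1: "c s y = 1" if "ds s y < r1" for s y
  proof -
    have "(r2 - ds s y) / (r2 - r1) \<ge> 1" using that r12 by (simp add: field_simps)
    then show ?thesis unfolding c_def by simp
  qed
  have cnz: "ds s y \<le> r2" if "c s y \<noteq> 0" for s y
  proof (rule ccontr)
    assume "\<not> ds s y \<le> r2"
    then have "(r2 - ds s y) / (r2 - r1) \<le> 0" using r12 by (simp add: divide_nonpos_pos)
    then have "max 0 ((r2 - ds s y) / (r2 - r1)) = 0" by (rule max_absorb1)
    then have "c s y = 0" unfolding c_def by simp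
    then show False using that by simp
  qed
  have crange: "0 \<le> c s y" "c s y \<le> 1" for s y unfolding c_def by auto
  define Q where "Q y = rot (h y)" for y
  define u where "u y = ku m n (Q y)" for y
  define GF where "GF y t a b = f (lam t y) $$ (a,b)" for y t a b
  define GE where "GE y t a b = complex_of_real (c t y) * (f (lam t y) $$ (a,b) - f x0 $$ (a,b))" for y t a b
  define GA where "GA y t a b = f (lam t y) $$ (a,b) - complex_of_real (c t y) * (f (lam t y) $$ (a,b) - f x0 $$ (a,b))" for y t a b
  define b where "b y = Bmat m n (Q y) (GA y)" for y
  have co: "colorth n (Q y)" for y unfolding Q_def by (rule rot_colorth[OF n h0 hs])
  have ro: "roworth n (Q y)" for y by (rule colorth_roworth[OF co])
  have dh: "diag_hom m n lam f y = bd m n (GF y)" for y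
    unfolding diag_hom_def bd_def GF_def by simp
  have key: "u y * diag_hom m n lam f y * cadjoint (u y)
        - four_block_mat (f x0) (0\<^sub>m m (n*m - m)) (0\<^sub>m (n*m - m) m) (b y) = ku m n (Q y) * bd m n (GE y) * cadjoint (ku m n (Q y))" for y
    unfolding u_def dh b_def
  proof (rule decomp[OF n fc co])
    fix t a b' assume t: "t < n" and a: "a < m" and b': "b' < m" and q: "Q y t 0 \<noteq> 0"
    have "h y t \<noteq> 0" using q unfolding Q_def rot_col0[OF h0] .
    then have "c t y = 1" using c1 hnz by blast
    then show "GA y t a b' = f x0 $$ (a, b')" unfolding GA_def by simp
  next
    fix t a b' assume "t < n" "a < m" "b' < m"
    show "GF y t a b' = GA y t a b' + GE y t a b'" unfolding GF_def GA_def GE_def by simp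
  qed
  have normb: "op_norm (u y * diag_hom m n lam f y * cadjoint (u y)
        - four_block_mat (f x0) (0\<^sub>m m (n*m - m)) (0\<^sub>m (n*m - m) m) (b y)) \<le> K" for y
    unfolding key
  proof (rule conj_norm[OF K0 _ ro co])
    fix t and z :: "nat \<Rightarrow> complex" assume t: "t < n"
    define Fm where "Fm = f (lam t y) - f x0"
    define zv where "zv = vec m z"
    have Fmc: "Fm \<in> carrier_mat m m" unfolding Fm_def by (simp add: minus_carrier_mat fc)
    have zvc: "zv \<in> carrier_vec (dim_col Fm)" using Fmc unfolding zv_def by simp
    have dr: "dim_row (f x0) = m" "dim_col (f x0) = m" using fc[of x0] by auto
    have ent: "(\<Sum>b<m. GE y t a b * z b) = complex_of_real (c t y) * (Fm *\<^sub>v zv) $ a" if a: "a < m" for a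
    proof -
      have "(Fm *\<^sub>v zv) $ a = (\<Sum>b\<in>{0..<m}. Fm $$ (a,b) * zv $ b)"
        using a Fmc zvc by (simp add: scalar_prod_def)
      also have "\<dots> = (\<Sum>b<m. (f (lam t y) $$ (a,b) - f x0 $$ (a,b)) * z b)"
        unfolding Fm_def zv_def using a dr by (intro sum.cong) auto
      finally show ?thesis unfolding GE_def by (simp add: sum_distrib_left mult_ac)
    qed
    have "(\<Sum>a<m. (cmod (\<Sum>b<m. GE y t a b * z b))^2) = (c t y)^2 * (\<Sum>a<m. (cmod ((Fm *\<^sub>v zv) $ a))^2)"
      using crange[of t y] by (simp add: ent norm_mult power_mult_distrib sum_distrib_left)
    also have "(\<Sum>a<m. (cmod ((Fm *\<^sub>v zv) $ a))^2) = (cvec_norm (Fm *\<^sub>v zv))^2"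
      using Fmc by (simp add: cvec_norm_sq)
    also have "(c t y)^2 * (cvec_norm (Fm *\<^sub>v zv))^2 \<le> 1 * (K * cvec_norm zv)^2"
    proof (cases "c t y = 0")
      case True then show ?thesis by simp
    next
      case False
      then have "ds t y \<le> r2" by (rule cnz)
      then have oK: "op_norm Fm \<le> K" unfolding Fm_def ds_def by (intro Kb) (simp add: dist_commute)
      have "cvec_norm (Fm *\<^sub>v zv) \<le> op_norm Fm * cvec_norm zv" by (rule op_norm_scale[OF zvc])
      also have "\<dots> \<le> K * cvec_norm zv" by (rule mult_right_mono[OF oK cvec_norm_nonneg])
      finally have "(cvec_norm (Fm *\<^sub>v zv))^2 \<le> (K * cvec_norm zv)^2"
        using cvec_norm_nonneg by (intro power_mono) auto
      moreover have "(c t y)^2 \<le> 1" using crange[of t y] by (simp add: power_le_one)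
      ultimately show ?thesis by (intro mult_mono) auto
    qed
    also have "1 * (K * cvec_norm zv)^2 = K^2 * (\<Sum>b<m. (cmod (z b))^2)"
      unfolding zv_def by (simp add: cvec_norm_sq power_mult_distrib)
    finally show "(\<Sum>a<m. (cmod (\<Sum>b<m. GE y t a b * z b))^2) \<le> K^2 * (\<Sum>b<m. (cmod (z b))^2)" .
  qed
  have Qc: "continuous_on UNIV (\<lambda>y. Q y s t)" if "s < n" "t < n" for s t
  proof -
    have nz: "\<forall>y\<in>UNIV. 1 + h y 0 \<noteq> 0" using h0 by (metis add_nonneg_eq_0_iff zero_le_one one_neq_zero)
    show ?thesis unfolding Q_def rot_def ralpha_def rbeta_def
      by (intro continuous_intros hc that n nz)
  qed
  have uc: "mat_cont (n*m) u"
    unfolding mat_cont_def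
  proof (intro conjI allI impI)
    fix y show "u y \<in> carrier_mat (n*m) (n*m)" unfolding u_def by simp
  next
    fix i j assume i: "i < n*m" and j: "j < n*m"
    note bi = blk_idx[OF i] and bj = blk_idx[OF j]
    have e: "(\<lambda>y. u y $$ (i,j)) = (\<lambda>y. if i mod m = j mod m then complex_of_real (Q y (j div m) (i div m)) else 0)"
      unfolding u_def ku_def using i j by auto
    show "continuous_on UNIV (\<lambda>y. u y $$ (i,j))"
      unfolding e by (cases "i mod m = j mod m") (auto intro!: continuous_intros Qc bi bj)
  qed
  have bc: "mat_cont (n*m - m) b"
    unfolding mat_cont_def
  proof (intro conjI allI impI)
    fix y show "b y \<in> carrier_mat (n*m - m) (n*m - m)" unfolding b_def Bmat_def by simp
  next
    fix i j assume i: "i < n*m - m" and j: "j < n*m - m"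
    have i': "i + m < n*m" and j': "j + m < n*m" using i j by auto
    note bi = blk_idx[OF i'] and bj = blk_idx[OF j']
    have e: "(\<lambda>y. b y $$ (i,j)) = (\<lambda>y. \<Sum>t<n. complex_of_real (Q y t ((i+m) div m) * Q y t ((j+m) div m)) * GA y t ((i+m) mod m) ((j+m) mod m))"
      unfolding b_def Bmat_def using i j by auto
    have fl: "continuous_on UNIV (\<lambda>y. f (lam t y) $$ (a,b'))" if "t < n" "a < m" "b' < m" for t a b'
      by (rule continuous_on_compose2[OF ec[OF that(2,3)] lc[rule_format, OF that(1)]]) auto
    show "continuous_on UNIV (\<lambda>y. b y $$ (i,j))"
      unfolding e GA_def by (intro continuous_intros Qc fl cc bi bj) auto
  qed
  have sn: "sup_norm (\<lambda>y. u y * diag_hom m n lam f y * cadjoint (u y)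
        - four_block_mat (f x0) (0\<^sub>m m (n*m - m)) (0\<^sub>m (n*m - m) m) (b y)) < \<epsilon>"
  proof -
    have "sup_norm (\<lambda>y. u y * diag_hom m n lam f y * cadjoint (u y)
        - four_block_mat (f x0) (0\<^sub>m m (n*m - m)) (0\<^sub>m (n*m - m) m) (b y)) \<le> K"
      unfolding sup_norm_def by (rule cSUP_least) (auto intro: normb)
    then show ?thesis using Keps by linarith
  qed
  have un: "\<forall>y. unitary_mat (u y)" unfolding u_def using ku_unitary[OF co] by blast
  show ?thesis using uc un bc sn by blast
qed

end
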